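(* Consider problem (P) and suppose $\bar x\in S$ is a weak local minimizer for (P). Then $F^{(1)}_-(\bar x;u)\ge 0$ for all $u\in\mathbb{R}^s$ (so $0\in\partial^{(1)}_- F(\bar x)$), and $F^{(2)}_-(\bar x;0;u)\ge 0$ for all $u\in\mathbb{R}^s$.
   Context: Problem (P): $C$-minimize $f(x)$ subject to $g(x)\in -K$, where $X\subset\mathbb{R}^s$ is open, $f:X\to\mathbb{R}^n$, $g:X\to\mathbb{R}^m$, and $C\subset\mathbb{R}^n$, $K\subset\mathbb{R}^m$ are closed convex cones with vertex at the origin; $C$ has nonempty interior and $C\ne\mathbb{R}^n$. Feasible set $S=\{x\in X: g(x)\in -K\}$. Positive polar of a cone $D$: $D^*=\{\lambda:\lambda\cdot y\ge 0\ \forall y\in D\}$. A feasible $\bar x$ is a weak local minimizer iff some neighborhood $N$ of $\bar x$ contains no $x\in S$ with $f(x)\in f(\bar x)-\operatorname{int}(C)$. $\Lambda=\{(\lambda,\mu): \lambda\in C^*,\ \mu\in K^*,\ \sum\lambda_i^2+\sum\mu_j^2=1\}$, $F(x)=\max\{\lambda\cdot[f(x)-f(\bar x)]+\mu\cdot g(x):(\lambda,\mu)\in\Lambda\}$. For $F$ at $\bar x$: $F^{(1)}_-(\bar x;u)=\liminf_{t\downarrow 0,\,u'\to u}t^{-1}[F(\bar x+tu')-F(\bar x)]$; $\partial^{(1)}_- F(\bar x)=\{x^*\text{ linear}: x^*(u)\le F^{(1)}_-(\bar x;u)\ \forall u\}$; and when $0\in\partial^{(1)}_-F(\bar x)$,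 $F^{(2)}_-(\bar x;0;u)=\liminf_{t\downarrow 0,\,u'\to u}2t^{-2}[F(\bar x+tu')-F(\bar x)]$. *)

theory Defs
  imports "HOL-Analysis.Analysis"
begin

definition pos_polar :: "'a::real_inner set \<Rightarrow> 'a set" where
  "pos_polar D = {l. \<forall>y\<in>D. l \<bullet> y \<ge> 0}"

definition closed_convex_cone :: "'a::real_normed_vector set \<Rightarrow> bool" where
  "closed_convex_cone D \<longleftrightarrow> closed D \<and> convex D \<and> cone D \<and> 0 \<in> D"

definition feasible_set :: "'a set \<Rightarrow> ('a \<Rightarrow> 'c::real_vector) \<Rightarrow> 'c set \<Rightarrow> 'a set" where
  "feasible_set X g K = {x\<in>X. g x \<in> uminus ` K}"

definition weak_local_min ::
  "'a::topological_space set \<Rightarrow> ('a \<Rightarrow> 'b::real_normed_vector) \<Rightarrow> ('a \<Rightarrow> 'c::real_vector)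
     \<Rightarrow> 'b set \<Rightarrow> 'c set \<Rightarrow> 'a \<Rightarrow> bool" where
  "weak_local_min X f g C K xb \<longleftrightarrow> xb \<in> feasible_set X g K \<and>
     (\<exists>N. open N \<and> xb \<in> N \<and>
        \<not> (\<exists>x\<in>feasible_set X g K \<inter> N. f x \<in> (\<lambda>c. f xb - c) ` interior C))"

definition Lam :: "'b::real_inner set \<Rightarrow> 'c::real_inner set \<Rightarrow> ('b \<times> 'c) set" where
  "Lam C K = {(l, m). l \<in> pos_polar C \<and> m \<in> pos_polar K \<and> l \<bullet> l + m \<bullet> m = 1}"

definition Fsc :: "('a \<Rightarrow> 'b::real_inner) \<Rightarrow> ('a \<Rightarrow> 'c::real_inner) \<Rightarrow> 'b set \<Rightarrow> 'c set
     \<Rightarrow> 'a \<Rightarrow> 'a \<Rightarrow> real" where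
  "Fsc f g C K xb x = (SUP p\<in>Lam C K. fst p \<bullet> (f x - f xb) + snd p \<bullet> g x)"

definition lower_dir1 :: "('a::real_normed_vector \<Rightarrow> real) \<Rightarrow> 'a \<Rightarrow> 'a \<Rightarrow> ereal" where
  "lower_dir1 F xb u =
     Liminf (at_right (0::real) \<times>\<^sub>F nhds u) (\<lambda>(t, u'). ereal ((F (xb + t *\<^sub>R u') - F xb) / t))"

definition lower_subdiff1 :: "('a::real_normed_vector \<Rightarrow> real) \<Rightarrow> 'a \<Rightarrow> ('a \<Rightarrow> real) set" where
  "lower_subdiff1 F xb = {xs. linear xs \<and> (\<forall>u. ereal (xs u) \<le> lower_dir1 F xb u)}"

text \<open>Lower second-order derivative at xb in direction u (with first-order part 0).\<close>
definition lower_dir2 :: "('a::real_normed_vector \<Rightarrow> real) \<Rightarrow> 'a \<Rightarrow> 'a \<Rightarrow> ereal" where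
  "lower_dir2 F xb u =
     Liminf (at_right (0::real) \<times>\<^sub>F nhds u) (\<lambda>(t, u'). ereal (2 * (F (xb + t *\<^sub>R u') - F xb) / t\<^sup>2))"

end

theory Submission imports Defs begin
lemma int_cone_scale:
  fixes C :: "'a::real_normed_vector set"
  assumes "cone C" "c \<in> interior C" "(r::real) > 0"
  shows "r *\<^sub>R c \<in> interior C"
proof -
  have "open ((*\<^sub>R) r ` interior C)" using assms(3) open_scaling[of r "interior C"] by simp
  moreover have "(*\<^sub>R) r ` interior C \<subseteq> C"
    using assms(1,3) interior_subset unfolding cone_def by fastforce
  ultimately have "(*\<^sub>R) r ` interior C \<subseteq> interior C" by (simp add: interior_maximal)
  thus ?thesis using assms(2) by blast
qed

lemma polar_from_int:
  fixes C :: "'n::euclidean_space set"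
  assumes "closed_convex_cone C" "interior C \<noteq> {}" "w \<notin> interior C"
  shows "\<exists>a. a \<noteq> 0 \<and> a \<in> pos_polar C \<and> a \<bullet> w \<le> 0"
proof -
  have cv: "convex C" "cone C" "closed C" using assms(1) unfolding closed_convex_cone_def by auto
  have "convex ((\<lambda>c. c - w) ` interior C)"
    using convex_translation[of "interior C" "-w"] convex_interior[OF cv(1)] by simp
  moreover have "0 \<notin> (\<lambda>c. c - w) ` interior C" using assms(3) by auto
  ultimately obtain a where a: "a \<noteq> 0" "\<forall>x\<in>(\<lambda>c. c - w) ` interior C. 0 \<le> a \<bullet> x"
    using separating_hyperplane_set_0 by blast
  have key: "a \<bullet> w \<le> r * (a \<bullet> c)" if "c \<in> interior C" "r > 0" for c r
  proof -
    have "r *\<^sub>R c \<in> interior C" using int_cone_scale[OF cv(2) that(1) that(2)] .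
    hence "0 \<le> a \<bullet> (r *\<^sub>R c - w)" using a(2) by blast
    thus ?thesis by (simp add: inner_diff_right)
  qed
  have pos: "a \<bullet> c \<ge> 0" if "c \<in> interior C" for c
  proof (rule ccontr)
    assume "\<not> ?thesis"
    hence n: "a \<bullet> c < 0" by simp
    define r where "r = (\<bar>a \<bullet> w\<bar> + 1) / (- (a \<bullet> c))"
    have nc: "- (a \<bullet> c) > 0" using n by simp
    have "0 < \<bar>a \<bullet> w\<bar> + 1" by simp
    from divide_pos_pos[OF this nc] have r: "r > 0" unfolding r_def .
    have "r * (a \<bullet> c) = - (\<bar>a \<bullet> w\<bar> + 1)" using n unfolding r_def by (simp add: field_simps)
    thus False using key[OF that r] by linarith
  qed
  obtain c0 where c0: "c0 \<in> interior C" using assms(2) by blast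
  have aw: "a \<bullet> w \<le> 0"
  proof (rule ccontr)
    assume "\<not> ?thesis"
    hence p: "a \<bullet> w > 0" by simp
    define r where "r = (a \<bullet> w) / (a \<bullet> c0 + 1)"
    have ge: "a \<bullet> c0 \<ge> 0" using pos[OF c0] .
    have r: "r > 0" using p ge unfolding r_def by simp
    have "r * (a \<bullet> c0) < a \<bullet> w"
    proof -
      have "r * (a \<bullet> c0) = (a \<bullet> w) * (a \<bullet> c0) / (a \<bullet> c0 + 1)" unfolding r_def by simp
      also have "\<dots> < a \<bullet> w" using p ge by (simp add: divide_less_eq)
      finally show ?thesis .
    qed
    thus False using key[OF c0 r] by linarith
  qed
  have "interior C \<subseteq> {x. a \<bullet> x \<ge> 0}" using pos by auto
  hence "closure (interior C) \<subseteq> {x. a \<bullet> x \<ge> 0}"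
    by (intro closure_minimal) (auto simp: closed_halfspace_ge)
  hence "closure C \<subseteq> {x. a \<bullet> x \<ge> 0}" using convex_closure_interior[OF cv(1) assms(2)] by simp
  hence "C \<subseteq> {x. a \<bullet> x \<ge> 0}" using closure_subset by blast
  hence "a \<in> pos_polar C" unfolding pos_polar_def by auto
  thus ?thesis using a(1) aw by blast
qed

lemma polar_from_out:
  fixes K :: "'m::euclidean_space set"
  assumes "closed_convex_cone K" "z \<notin> K"
  shows "\<exists>a. a \<in> pos_polar K \<and> a \<bullet> z < 0"
proof -
  have cv: "convex K" "cone K" "closed K" "0 \<in> K" using assms(1) unfolding closed_convex_cone_def by auto
  obtain a b where ab: "a \<bullet> z < b" "\<forall>x\<in>K. b < a \<bullet> x"
    using separating_hyperplane_closed_point[OF cv(1) cv(3) assms(2)] by blast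
  have b: "b < 0" using ab(2) cv(4) by force
  have "a \<bullet> k \<ge> 0" if "k \<in> K" for k
  proof (rule ccontr)
    assume "\<not> ?thesis"
    hence n: "a \<bullet> k < 0" by simp
    define r where "r = b / (a \<bullet> k)"
    have r: "r > 0" using n b unfolding r_def by (simp add: divide_neg_neg)
    have "r *\<^sub>R k \<in> K" using cv(2) that r unfolding cone_def by auto
    hence "b < r * (a \<bullet> k)" using ab(2) by auto
    moreover have "r * (a \<bullet> k) = b" using n unfolding r_def by simp
    ultimately show False by simp
  qed
  hence "a \<in> pos_polar K" unfolding pos_polar_def by auto
  thus ?thesis using ab(1) b by auto
qed

lemma lam_norm:
  assumes "p \<in> Lam C K"
  shows "norm (fst p) \<le> 1" "norm (snd p) \<le> 1"
proof -
  have e: "fst p \<bullet> fst p + snd p \<bullet> snd p = 1" using assms unfolding Lam_def by auto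
  have "norm (fst p) ^ 2 \<le> 1" "norm (snd p) ^ 2 \<le> 1"
    using e by (simp_all add: power2_norm_eq_inner) (smt (verit) inner_ge_zero)+
  thus "norm (fst p) \<le> 1" "norm (snd p) \<le> 1"
    by (simp_all add: power_le_one_iff abs_le_square_iff[symmetric])
qed

lemma Fsc_bdd:
  "bdd_above ((\<lambda>p. fst p \<bullet> (f x - f xb) + snd p \<bullet> g x) ` Lam C K)"
proof (rule bdd_aboveI2)
  fix p assume p: "p \<in> Lam C K"
  have "fst p \<bullet> (f x - f xb) \<le> norm (fst p) * norm (f x - f xb)" by (rule norm_cauchy_schwarz)
  also have "\<dots> \<le> norm (f x - f xb)" using lam_norm(1)[OF p] by (simp add: mult_left_le_one_le)
  finally have 1: "fst p \<bullet> (f x - f xb) \<le> norm (f x - f xb)" .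
  have "snd p \<bullet> g x \<le> norm (snd p) * norm (g x)" by (rule norm_cauchy_schwarz)
  also have "\<dots> \<le> norm (g x)" using lam_norm(2)[OF p] by (simp add: mult_left_le_one_le)
  finally show "fst p \<bullet> (f x - f xb) + snd p \<bullet> g x \<le> norm (f x - f xb) + norm (g x)" using 1 by linarith
qed

lemma normalize_unit:
  fixes a :: "'a::real_inner"
  assumes "a \<noteq> 0" shows "(a /\<^sub>R norm a) \<bullet> (a /\<^sub>R norm a) = 1"
  using assms by (simp add: power2_norm_eq_inner[symmetric] divide_inverse power2_eq_square)

lemma polar_scale: "a \<in> pos_polar D \<Longrightarrow> (r::real) \<ge> 0 \<Longrightarrow> r *\<^sub>R a \<in> pos_polar D"
  unfolding pos_polar_def by auto

lemma zero_polar: "0 \<in> pos_polar D"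
  unfolding pos_polar_def by auto

theorem mainTheorem10:
  fixes X :: "'s::euclidean_space set"
    and f :: "'s \<Rightarrow> 'n::euclidean_space"
    and g :: "'s \<Rightarrow> 'm::euclidean_space"
    and C :: "'n set" and K :: "'m set" and xb :: 's
  assumes "open X"
    and "closed_convex_cone C" and "interior C \<noteq> {}" and "C \<noteq> UNIV"
    and "closed_convex_cone K"
    and "weak_local_min X f g C K xb"
  shows "(\<forall>u. lower_dir1 (Fsc f g C K xb) xb u \<ge> 0)
       \<and> (\<lambda>u. 0) \<in> lower_subdiff1 (Fsc f g C K xb) xb
       \<and> (\<forall>u. lower_dir2 (Fsc f g C K xb) xb u \<ge> 0)"
proof -
  let ?F = "Fsc f g C K xb"
  let ?v = "\<lambda>x p. fst p \<bullet> (f x - f xb) + snd p \<bullet> g x"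
  obtain N where N: "open N" "xb \<in> N"
    "\<not> (\<exists>x\<in>feasible_set X g K \<inter> N. f x \<in> (\<lambda>c. f xb - c) ` interior C)"
    and xbS: "xb \<in> feasible_set X g K"
    using assms(6) unfolding weak_local_min_def by blast
  have ex: "\<exists>p\<in>Lam C K. 0 \<le> ?v x p" if x: "x \<in> X" "x \<in> N" for x
  proof (cases "g x \<in> uminus ` K")
    case True
    hence fs: "x \<in> feasible_set X g K" using x unfolding feasible_set_def by auto
    have "f xb - f x \<notin> interior C"
    proof
      assume "f xb - f x \<in> interior C"
      hence "f x \<in> (\<lambda>c. f xb - c) ` interior C" by (intro image_eqI[of _ _ "f xb - f x"]) auto
      thus False using N(3) fs x(2) by blast
    qed
    then obtain a where a: "a \<noteq> 0" "a \<in> pos_polar C" "a \<bullet> (f xb - f x) \<le> 0"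
      using polar_from_int[OF assms(2,3)] by blast
    obtain k where k: "k \<in> K" "g x = - k" using True by auto
    let ?p = "(a /\<^sub>R norm a, 0::'m)"
    have "?p \<in> Lam C K" unfolding Lam_def
      using normalize_unit[OF a(1)] polar_scale[OF a(2)] zero_polar by (auto simp: divide_inverse)
    moreover have "0 \<le> ?v x ?p"
    proof -
      have "inverse (norm a) * (a \<bullet> f xb) \<le> inverse (norm a) * (a \<bullet> f x)"
        by (rule mult_left_mono) (use a(3) in \<open>simp_all add: inner_diff_right\<close>)
      thus ?thesis by (simp add: inner_diff_right divide_inverse)
    qed
    ultimately show ?thesis by blast
  next
    case False
    hence "- g x \<notin> K" by (metis image_eqI minus_minus)
    then obtain a where a: "a \<in> pos_polar K" "a \<bullet> (- g x) < 0"
      using polar_from_out[OF assms(5)] by blast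
    have a0: "a \<noteq> 0" using a(2) by auto
    let ?p = "(0::'n, a /\<^sub>R norm a)"
    have "?p \<in> Lam C K" unfolding Lam_def
      using normalize_unit[OF a0] polar_scale[OF a(1)] zero_polar by (auto simp: divide_inverse)
    moreover have "0 \<le> ?v x ?p" using a(2)
      by (simp add: divide_inverse)
    ultimately show ?thesis by blast
  qed
  have ge: "?F x \<ge> ?F xb" if x: "x \<in> X" "x \<in> N" for x
  proof -
    obtain p where p: "p \<in> Lam C K" "0 \<le> ?v x p" using ex[OF x] by blast
    have "0 \<le> ?F x" unfolding Fsc_def
      using p cSUP_upper[OF p(1) Fsc_bdd[of f x xb g C K]] by linarith
    moreover have "?F xb \<le> 0" unfolding Fsc_def
    proof (rule cSUP_least)
      show "Lam C K \<noteq> {}" using p by blast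
      fix q assume q: "q \<in> Lam C K"
      obtain k where k: "k \<in> K" "g xb = - k" using xbS unfolding feasible_set_def by auto
      have "snd q \<bullet> k \<ge> 0" using q k unfolding Lam_def pos_polar_def by auto
      thus "?v xb q \<le> 0" using k by simp
    qed
    ultimately show ?thesis by linarith
  qed
  have evx: "eventually (\<lambda>x. ?F x \<ge> ?F xb) (nhds xb)"
  proof -
    have "eventually (\<lambda>x. x \<in> X \<inter> N) (nhds xb)"
      using xbS N(1,2) assms(1) unfolding feasible_set_def
      by (intro eventually_nhds_in_open) auto
    thus ?thesis by eventually_elim (use ge in auto)
  qed
  have ev: "eventually (\<lambda>(t,u'). t > 0 \<and> ?F (xb + t *\<^sub>R u') \<ge> ?F xb) (at_right (0::real) \<times>\<^sub>F nhds u)" for u :: 's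
  proof -
    have lim: "((\<lambda>p. xb + fst p *\<^sub>R snd p) \<longlongrightarrow> xb + 0 *\<^sub>R u) (at_right (0::real) \<times>\<^sub>F nhds u)"
    proof (intro tendsto_intros)
      have "at_right (0::real) \<le> nhds 0" unfolding at_within_def by (rule inf_le1)
      from filterlim_mono[OF filterlim_fst this order_refl]
      show "(fst \<longlongrightarrow> 0) (at_right (0::real) \<times>\<^sub>F nhds u)" .
      show "(snd \<longlongrightarrow> u) (at_right (0::real) \<times>\<^sub>F nhds u)" by (rule filterlim_snd)
    qed
    have 1: "eventually (\<lambda>p. ?F (xb + fst p *\<^sub>R snd p) \<ge> ?F xb) (at_right (0::real) \<times>\<^sub>F nhds u)"
      using lim evx unfolding filterlim_iff by fastforce
    have 2: "eventually (\<lambda>p. fst p > (0::real) \<and> True) (at_right (0::real) \<times>\<^sub>F nhds u)"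
      by (rule eventually_prodI[where Q="\<lambda>_. True"]) (auto simp: eventually_at_right_less)
    from 1 2 show ?thesis by eventually_elim auto
  qed
  have d1: "lower_dir1 ?F xb u \<ge> 0" for u
    unfolding lower_dir1_def zero_ereal_def
    by (rule Liminf_bounded, use ev[of u] in eventually_elim) auto
  have d2: "lower_dir2 ?F xb u \<ge> 0" for u
    unfolding lower_dir2_def zero_ereal_def
    by (rule Liminf_bounded, use ev[of u] in eventually_elim) auto
  have "(\<lambda>u. 0) \<in> lower_subdiff1 ?F xb"
    unfolding lower_subdiff1_def using d1 by (auto intro: linearI simp: zero_ereal_def[symmetric])
  thus ?thesis using d1 d2 by blast
qed

end
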